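(* There is an absolute constant $C$ such that for all positive integers $k$ and $s$, $La^*([k]^2,\vee_s)\ge 2(s-1)k-Cs^2$.
   Context: $[k]^2$ is ordered coordinatewise. $\vee_s$ is the poset on $s+1$ elements $a,b_1,\dots,b_s$ whose only relations are $a<b_i$, $i=1,\dots,s$. For posets $P,R$, $P$ is a strong subposet of $R$ if there is an injection $i:P\to R$ with $p\le_P p'\iff i(p)\le_R i(p')$. A subset $F\subseteq Q$ is strong $P$-free if $P$ is not a strong subposet of $F$ with the induced order; $La^*(Q,P)$ is the maximum size of a strong $P$-free subset of $Q$. *)

theory Defs
  imports Complex_Main
begin

definition strong_subposet ::
  "'a set \<Rightarrow> ('a \<Rightarrow> 'a \<Rightarrow> bool) \<Rightarrow> 'b set \<Rightarrow> ('b \<Rightarrow> 'b \<Rightarrow> bool) \<Rightarrow> bool" where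
  "strong_subposet P leP R leR \<longleftrightarrow>
     (\<exists>i. inj_on i P \<and> i ` P \<subseteq> R \<and>
          (\<forall>p\<in>P. \<forall>p'\<in>P. leP p p' \<longleftrightarrow> leR (i p) (i p')))"

definition strong_free ::
  "'b set \<Rightarrow> ('b \<Rightarrow> 'b \<Rightarrow> bool) \<Rightarrow> 'a set \<Rightarrow> ('a \<Rightarrow> 'a \<Rightarrow> bool) \<Rightarrow> bool" where
  "strong_free F leQ P leP \<longleftrightarrow> \<not> strong_subposet P leP F leQ"

definition La_star ::
  "'b set \<Rightarrow> ('b \<Rightarrow> 'b \<Rightarrow> bool) \<Rightarrow> 'a set \<Rightarrow> ('a \<Rightarrow> 'a \<Rightarrow> bool) \<Rightarrow> nat" where
  "La_star Q leQ P leP = Max {card F | F. F \<subseteq> Q \<and> strong_free F leQ P leP}"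

definition grid :: "nat \<Rightarrow> (nat \<times> nat) set" where
  "grid k = {1..k} \<times> {1..k}"

definition grid_le :: "nat \<times> nat \<Rightarrow> nat \<times> nat \<Rightarrow> bool" where
  "grid_le x y \<longleftrightarrow> fst x \<le> fst y \<and> snd x \<le> snd y"

text \<open>The poset V_s on {0,...,s}: element 0 is a, element i (1 <= i <= s) is b_i;
 the only (strict) relations are a < b_i.\<close>
definition vee :: "nat \<Rightarrow> nat set" where
  "vee s = {0..s}"

definition vee_le :: "nat \<Rightarrow> nat \<Rightarrow> bool" where
  "vee_le x y \<longleftrightarrow> x = y \<or> (x = 0 \<and> y \<noteq> 0)"

end

theory Submission
  imports Defs
begin

lemma La_ge:
  assumes "F \<subseteq> grid k" "strong_free F grid_le (vee s) vee_le"
  shows "card F \<le> La_star (grid k) grid_le (vee s) vee_le"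
proof -
  have fin: "finite (grid k)" unfolding grid_def by simp
  have "{card F | F. F \<subseteq> grid k \<and> strong_free F grid_le (vee s) vee_le} \<subseteq> {0..card (grid k)}"
    using fin card_mono by fastforce
  hence "finite {card F | F. F \<subseteq> grid k \<and> strong_free F grid_le (vee s) vee_le}"
    using finite_subset by blast
  thus ?thesis unfolding La_star_def using assms by (intro Max_ge) auto
qed

lemma empty_free: "strong_free {} grid_le (vee s) vee_le"
  unfolding strong_free_def strong_subposet_def vee_def by auto

lemma pigeon:
  fixes g :: "nat \<Rightarrow> nat \<times> nat" and h :: "nat \<times> nat \<Rightarrow> nat"
  assumes inc: "\<And>j j'. j \<in> {1..s} \<Longrightarrow> j' \<in> {1..s} \<Longrightarrow> j \<noteq> j' \<Longrightarrow> \<not> grid_le (g j) (g j')"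
    and hdef: "h = fst \<or> h = snd"
    and rng: "\<And>j. j \<in> {1..s} \<Longrightarrow> h (g j) \<in> {t<..k}"
    and ks: "k - t = s - 1" and s: "0 < s"
  shows False
proof -
  have "inj_on (h \<circ> g) {1..s}"
  proof (rule inj_onI)
    fix j j' assume j: "j \<in> {1..s}" "j' \<in> {1..s}" and e: "(h \<circ> g) j = (h \<circ> g) j'"
    show "j = j'"
    proof (rule ccontr)
      assume ne: "j \<noteq> j'"
      have "\<not> grid_le (g j) (g j')" "\<not> grid_le (g j') (g j)" using inc j ne by auto
      thus False using e hdef unfolding grid_le_def by auto
    qed
  qed
  moreover have "(h \<circ> g) ` {1..s} \<subseteq> {t<..k}" using rng by auto
  ultimately have "card {1..s} \<le> card {t<..k}" by (intro card_inj_on_le[of "h \<circ> g"]) auto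
  thus False using ks s by simp
qed

lemma main_free:
  assumes s: "0 < s" and ks: "k - t = s - 1"
  shows "strong_free (({t<..k} \<times> {1..k}) \<union> ({1..t} \<times> {t<..k})) grid_le (vee s) vee_le"
  unfolding strong_free_def strong_subposet_def
proof
  assume "\<exists>i. inj_on i (vee s) \<and> i ` vee s \<subseteq> ({t<..k} \<times> {1..k}) \<union> ({1..t} \<times> {t<..k}) \<and>
          (\<forall>p\<in>vee s. \<forall>p'\<in>vee s. vee_le p p' = grid_le (i p) (i p'))"
  then obtain i where inj: "inj_on i (vee s)"
    and im: "i ` vee s \<subseteq> ({t<..k} \<times> {1..k}) \<union> ({1..t} \<times> {t<..k})"
    and ord: "\<forall>p\<in>vee s. \<forall>p'\<in>vee s. vee_le p p' = grid_le (i p) (i p')" by blast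
  have inc: "\<not> grid_le (i j) (i j')" if "j \<in> {1..s}" "j' \<in> {1..s}" "j \<noteq> j'" for j j'
  proof -
    have "j \<in> vee s" "j' \<in> vee s" using that unfolding vee_def by auto
    hence "vee_le j j' = grid_le (i j) (i j')" using ord by blast
    thus ?thesis using that unfolding vee_le_def by auto
  qed
  have above: "grid_le (i 0) (i j)" if "j \<in> {1..s}" for j
  proof -
    have "j \<in> vee s" "0 \<in> vee s" using that unfolding vee_def by auto
    hence "vee_le 0 j = grid_le (i 0) (i j)" using ord by blast
    thus ?thesis using that unfolding vee_le_def by auto
  qed
  have "0 \<in> vee s" unfolding vee_def by auto
  hence i0: "i 0 \<in> ({t<..k} \<times> {1..k}) \<union> ({1..t} \<times> {t<..k})" using im by blast
  have ij: "i j \<in> ({t<..k} \<times> {1..k}) \<union> ({1..t} \<times> {t<..k})" if "j \<in> {1..s}" for j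
  proof -
    have "j \<in> vee s" using that unfolding vee_def by auto
    thus ?thesis using im by blast
  qed
  show False
  proof (cases "fst (i 0) > t")
    case True
    show False
    proof (rule pigeon[of s i fst t k])
      fix j assume j: "j \<in> {1..s}"
      show "fst (i j) \<in> {t<..k}" using above[OF j] ij[OF j] True unfolding grid_le_def by auto
    qed (use inc ks s in auto)
  next
    case False
    hence "snd (i 0) > t" using i0 by auto
    show False
    proof (rule pigeon[of s i snd t k])
      fix j assume j: "j \<in> {1..s}"
      show "snd (i j) \<in> {t<..k}" using above[OF j] ij[OF j] \<open>snd (i 0) > t\<close> unfolding grid_le_def by auto
    qed (use inc ks s in auto)
  qed
qed

theorem theorem1p5:
  shows "\<exists>C::real. \<forall>k s :: nat. 0 < k \<longrightarrow> 0 < s \<longrightarrow>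
           real (La_star (grid k) grid_le (vee s) vee_le)
             \<ge> 2 * (real s - 1) * real k - C * (real s)^2"
proof (intro exI allI impI)
  fix k s :: nat assume k: "0 < k" and s: "0 < s"
  show "real (La_star (grid k) grid_le (vee s) vee_le) \<ge> 2 * (real s - 1) * real k - 2 * (real s)^2"
  proof (cases "k < s")
    case True
    have "real k * real s \<le> real s * real s" using True by (intro mult_right_mono) auto
    hence "2 * (real s - 1) * real k - 2 * (real s)^2 \<le> 0"
      by (simp add: power2_eq_square algebra_simps)
    thus ?thesis by (smt (verit) of_nat_0_le_iff)
  next
    case False
    define t where "t = k - (s - 1)"
    have ks: "k - t = s - 1" and t1: "1 \<le> t" and tk: "t \<le> k" using False s unfolding t_def by auto
    let ?F = "({t<..k} \<times> {1..k}) \<union> ({1..t} \<times> {t<..k})"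
    have sub: "?F \<subseteq> grid k" unfolding grid_def using tk by auto
    have "card ?F = card ({t<..k} \<times> {1..k}) + card ({1..t} \<times> {t<..k})"
      by (rule card_Un_disjoint) auto
    also have "\<dots> = (s - 1) * k + t * (s - 1)" using ks by (simp add: card_cartesian_product)
    finally have cF: "card ?F = (s - 1) * k + t * (s - 1)" .
    have le: "card ?F \<le> La_star (grid k) grid_le (vee s) vee_le"
      by (rule La_ge[OF sub main_free[OF s ks]])
    have rt: "real t = real k - real s + 1" using False s unfolding t_def by auto
    have "real (card ?F) = (real s - 1) * real k + real t * (real s - 1)"
      using cF s by (simp add: of_nat_diff)
    also have "\<dots> = 2 * (real s - 1) * real k - (real s - 1)^2"
      unfolding rt by (simp add: power2_eq_square algebra_simps)
    also have "\<dots> \<ge> 2 * (real s - 1) * real k - 2 * (real s)^2"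
    proof -
      have "1 \<le> real s" using s by simp
      hence "1 * 1 \<le> real s * real s" by (intro mult_mono) auto
      hence "(real s - 1)^2 \<le> 2 * (real s)^2" using \<open>1 \<le> real s\<close> by (simp add: power2_eq_square algebra_simps)
      thus ?thesis by linarith
    qed
    finally show ?thesis using le by linarith
  qed
qed

end
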